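(* Let $\lambda=(\lambda_1,\dots,\lambda_l)$ and $\mu=(\mu_1,\dots,\mu_m)$ be decompositions of $n$ with $1<\mu_m<\lambda_l$, and let $\mu'=(\mu_1,\dots,\mu_{m-1},\mu_m-1,1)$. Then $P_{\lambda|\mu'}\le P_{\lambda|\mu}$ has index $[P_{\lambda|\mu}:P_{\lambda|\mu'}]=2^{\mu_m}-1$.
   Context: A decomposition of $N$ is a finite sequence of positive integers with sum $N$. For a decomposition $\lambda=(\lambda_1,\dots,\lambda_l)$ of $N$, $P_\lambda\le\mathrm{GL}_N(\mathbb{F}_2)$ is the standard parabolic subgroup of invertible block upper triangular matrices with diagonal blocks of sizes $\lambda_1,\dots,\lambda_l$ in this order. $P_\mu^t$ is the group of transposes of elements of $P_\mu$, and $P_{\lambda|\mu}=P_\lambda\cap P_\mu^t$. *)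

theory Defs
  imports "Jordan_Normal_Form.Matrix" "HOL-Library.Z2"
begin

definition decomposition :: "nat \<Rightarrow> nat list \<Rightarrow> bool" where
  "decomposition N ds \<longleftrightarrow> (\<forall>x\<in>set ds. 0 < x) \<and> sum_list ds = N"

text \<open>Block index (0-based) of row/column i (0-based) for decomposition ds.\<close>
definition blk :: "nat list \<Rightarrow> nat \<Rightarrow> nat" where
  "blk ds i = card {k. k < length ds \<and> sum_list (take (Suc k) ds) \<le> i}"

definition parabolic :: "nat \<Rightarrow> nat list \<Rightarrow> bit mat set" where
  "parabolic N ds = {A \<in> carrier_mat N N. invertible_mat A \<and>
      (\<forall>i<N. \<forall>j<N. blk ds j < blk ds i \<longrightarrow> A $$ (i, j) = 0)}"

definition parabolic_t :: "nat \<Rightarrow> nat list \<Rightarrow> bit mat set" where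
  "parabolic_t N ds = transpose_mat ` parabolic N ds"

definition parabolic2 :: "nat \<Rightarrow> nat list \<Rightarrow> nat list \<Rightarrow> bit mat set" where
  "parabolic2 N lam mu = parabolic N lam \<inter> parabolic_t N mu"

definition subgroup_index :: "bit mat set \<Rightarrow> bit mat set \<Rightarrow> nat" where
  "subgroup_index H K = card {(\<lambda>B. A * B) ` K | A. A \<in> H}"

end

theory Submission
  imports Defs
begin


lemma take_sum_mono: "k \<le> k' \<Longrightarrow> sum_list (take k ds) \<le> sum_list (take k' (ds::nat list))"
proof -
  assume "k \<le> k'"
  then obtain m where "k' = k + m" using le_Suc_ex by blast
  then show ?thesis by (simp add: take_add)
qed

lemma blk_lt: assumes "i < sum_list ds" shows "blk ds i < length ds"
proof -
  have "{k. k < length ds \<and> sum_list (take (Suc k) ds) \<le> i} \<subseteq> {..<length ds - 1}"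
  proof
    fix k assume "k \<in> {k. k < length ds \<and> sum_list (take (Suc k) ds) \<le> i}"
    then have k: "k < length ds" "sum_list (take (Suc k) ds) \<le> i" by auto
    have "k \<noteq> length ds - 1"
    proof
      assume "k = length ds - 1"
      then have "Suc k = length ds" using k by simp
      then show False using k assms by simp
    qed
    then show "k \<in> {..<length ds - 1}" using k by auto
  qed
  then have "card {k. k < length ds \<and> sum_list (take (Suc k) ds) \<le> i} \<le> card {..<length ds - 1}"
    by (intro card_mono) auto
  then have "blk ds i \<le> length ds - 1" unfolding blk_def by simp
  moreover have "ds \<noteq> []" using assms by auto
  ultimately show ?thesis by (cases ds) auto
qed

lemma blk_snoc_hi: assumes "sum_list xs \<le> i" "i < sum_list xs + c"
  shows "blk (xs @ [c]) i = length xs"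
proof -
  have "{k. k < length (xs@[c]) \<and> sum_list (take (Suc k) (xs@[c])) \<le> i} = {..<length xs}"
  proof (intro subset_antisym subsetI)
    fix k assume "k \<in> {k. k < length (xs@[c]) \<and> sum_list (take (Suc k) (xs@[c])) \<le> i}"
    then have k: "k < Suc (length xs)" "sum_list (take (Suc k) (xs@[c])) \<le> i" by auto
    show "k \<in> {..<length xs}"
    proof (rule ccontr)
      assume "k \<notin> {..<length xs}"
      then have "k = length xs" using k by auto
      then show False using k assms by simp
    qed
  next
    fix k assume "k \<in> {..<length xs}"
    then have kl: "k < length xs" by auto
    have "sum_list (take (Suc k) xs) \<le> sum_list (take (length xs) xs)"
      using take_sum_mono kl by (metis Suc_leI)
    moreover have "take (Suc k) (xs@[c]) = take (Suc k) xs" using kl by simp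
    ultimately show "k \<in> {k. k < length (xs@[c]) \<and> sum_list (take (Suc k) (xs@[c])) \<le> i}"
      using assms kl by simp
  qed
  then show ?thesis unfolding blk_def by simp
qed

lemma blk_snoc_lo: assumes "i < sum_list xs"
  shows "blk (xs @ [c]) i = blk xs i"
proof -
  have "{k. k < length (xs@[c]) \<and> sum_list (take (Suc k) (xs@[c])) \<le> i}
      = {k. k < length xs \<and> sum_list (take (Suc k) xs) \<le> i}"
  proof (intro subset_antisym subsetI)
    fix k assume "k \<in> {k. k < length (xs@[c]) \<and> sum_list (take (Suc k) (xs@[c])) \<le> i}"
    then have k: "k < Suc (length xs)" "sum_list (take (Suc k) (xs@[c])) \<le> i" by auto
    have "k \<noteq> length xs"
    proof
      assume "k = length xs" then show False using k assms by simp
    qed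
    then have kl: "k < length xs" using k by simp
    then have "take (Suc k) (xs@[c]) = take (Suc k) xs" by simp
    then show "k \<in> {k. k < length xs \<and> sum_list (take (Suc k) xs) \<le> i}" using k kl by simp
  next
    fix k assume "k \<in> {k. k < length xs \<and> sum_list (take (Suc k) xs) \<le> i}"
    then have k: "k < length xs" "sum_list (take (Suc k) xs) \<le> i" by auto
    then have "take (Suc k) (xs@[c]) = take (Suc k) xs" by simp
    then show "k \<in> {k. k < length (xs@[c]) \<and> sum_list (take (Suc k) (xs@[c])) \<le> i}"
      using k by simp
  qed
  then show ?thesis unfolding blk_def by simp
qed



declare add_bit_eq_xor[simp del] mult_bit_eq_and[simp del]


definition zc :: "(nat \<Rightarrow> nat \<Rightarrow> bool) \<Rightarrow> nat \<Rightarrow> bit mat \<Rightarrow> bool" where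
  "zc R N A \<longleftrightarrow> (\<forall>i<N. \<forall>j<N. R i j \<longrightarrow> A $$ (i,j) = 0)"

definition GS :: "nat \<Rightarrow> (nat \<Rightarrow> nat \<Rightarrow> bool) \<Rightarrow> (nat \<Rightarrow> nat \<Rightarrow> bool) \<Rightarrow> bit mat set" where
  "GS N R1 R2 = {A \<in> carrier_mat N N. invertible_mat A \<and> zc R1 N A \<and> zc R2 N A}"

lemma mult_entry:
  assumes "A \<in> carrier_mat N N" "B \<in> carrier_mat N N" "i < N" "j < N"
  shows "(A * B) $$ (i,j) = (\<Sum>l<N. A $$ (i,l) * B $$ (l,j))"
  using assms by (simp add: scalar_prod_def lessThan_atLeast0)

lemma inv_iff:
  assumes "A \<in> carrier_mat N N"
  shows "invertible_mat A \<longleftrightarrow> (\<exists>B\<in>carrier_mat N N. A * B = 1\<^sub>m N \<and> B * A = 1\<^sub>m N)"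
proof
  assume "invertible_mat A"
  then have "\<exists>B. inverts_mat A B \<and> inverts_mat B A" unfolding invertible_mat_def by simp
  then obtain B where "inverts_mat A B" "inverts_mat B A" by (elim exE conjE)
  then have B: "A * B = 1\<^sub>m (dim_row A)" "B * A = 1\<^sub>m (dim_row B)"
    unfolding inverts_mat_def by simp_all
  have rA: "dim_row A = N" and cA: "dim_col A = N" using assms by auto
  have "dim_col (A * B) = dim_row A" unfolding B(1) by simp
  then have c: "dim_col B = N" using rA by simp
  have "dim_col (B * A) = dim_row B" unfolding B(2) by simp
  then have r: "dim_row B = N" using cA by simp
  have Bc: "B \<in> carrier_mat N N" using c r by (intro carrier_matI) simp_all
  have e1: "A * B = 1\<^sub>m N" using B(1) rA by simp
  have e2: "B * A = 1\<^sub>m N" using B(2) r by simp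
  show "\<exists>B\<in>carrier_mat N N. A * B = 1\<^sub>m N \<and> B * A = 1\<^sub>m N"
    by (rule bexI[of _ B]) (use e1 e2 Bc in simp_all)
next
  assume "\<exists>B\<in>carrier_mat N N. A * B = 1\<^sub>m N \<and> B * A = 1\<^sub>m N"
  then obtain B where B: "B \<in> carrier_mat N N" "A * B = 1\<^sub>m N" "B * A = 1\<^sub>m N" by auto
  have rA: "dim_row A = N" and cA: "dim_col A = N" using assms by auto
  have rB: "dim_row B = N" using B(1) by auto
  have "inverts_mat A B" unfolding inverts_mat_def using B(2) rA by simp
  moreover have "inverts_mat B A" unfolding inverts_mat_def using B(3) rB by simp
  moreover have "square_mat A" using rA cA by simp
  ultimately show "invertible_mat A" unfolding invertible_mat_def by blast
qed

lemma zc_mult: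
  assumes "zc R N A" "zc R N B" "A \<in> carrier_mat N N" "B \<in> carrier_mat N N"
    and split: "\<And>i j k. R i j \<Longrightarrow> R i k \<or> R k j"
  shows "zc R N (A * B)"
  unfolding zc_def
proof (intro allI impI)
  fix i j assume ij: "i < N" "j < N" "R i j"
  have "(A * B) $$ (i,j) = (\<Sum>l<N. A $$ (i,l) * B $$ (l,j))" using mult_entry[OF assms(3,4) ij(1,2)] .
  also have "\<dots> = (\<Sum>l<N. 0)"
  proof (rule sum.cong)
    fix l assume "l \<in> {..<N}"
    then have "l < N" by simp
    then show "A $$ (i,l) * B $$ (l,j) = 0"
    proof (cases "R i l")
      case True
      then have "A $$ (i,l) = 0" using assms(1) ij(1) \<open>l < N\<close> unfolding zc_def by simp
      then show ?thesis by simp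
    next
      case False
      then have "R l j" using split[OF ij(3), of l] by blast
      then have "B $$ (l,j) = 0" using assms(2) ij(2) \<open>l < N\<close> unfolding zc_def by simp
      then show ?thesis by simp
    qed
  qed simp
  finally show "(A * B) $$ (i,j) = 0" by simp
qed

lemma zc_one:
  assumes "\<And>i. \<not> R i i" shows "zc R N (1\<^sub>m N)"
  unfolding zc_def using assms by auto

lemma inv_obtain:
  assumes "A \<in> carrier_mat N N" "invertible_mat A"
  obtains A' where "A' \<in> carrier_mat N N" "A * A' = 1\<^sub>m N" "A' * A = 1\<^sub>m N"
proof -
  have "\<exists>A'\<in>carrier_mat N N. A * A' = 1\<^sub>m N \<and> A' * A = 1\<^sub>m N"
    using inv_iff[OF assms(1)] assms(2) by simp
  then obtain A' where "A' \<in> carrier_mat N N" "A * A' = 1\<^sub>m N \<and> A' * A = 1\<^sub>m N" by (rule bexE)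
  then show ?thesis using that by simp
qed

lemma inv_intro:
  assumes "A \<in> carrier_mat N N" "A' \<in> carrier_mat N N" "A * A' = 1\<^sub>m N" "A' * A = 1\<^sub>m N"
  shows "invertible_mat A"
proof -
  have "\<exists>A'\<in>carrier_mat N N. A * A' = 1\<^sub>m N \<and> A' * A = 1\<^sub>m N"
    using assms(2-4) by (intro bexI[of _ A']) simp_all
  then show ?thesis using inv_iff[OF assms(1)] by simp
qed

lemma assoc3: "A \<in> carrier_mat N N \<Longrightarrow> B \<in> carrier_mat N N \<Longrightarrow> C \<in> carrier_mat N N
   \<Longrightarrow> (A * B) * C = A * (B * (C :: bit mat))"
  by (rule assoc_mult_mat)

lemma inv_mult:
  fixes A B :: "bit mat"
  assumes "A \<in> carrier_mat N N" "B \<in> carrier_mat N N" "invertible_mat A" "invertible_mat B"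
  shows "invertible_mat (A * B)"
proof -
  obtain A' where A': "A' \<in> carrier_mat N N" "A * A' = 1\<^sub>m N" "A' * A = 1\<^sub>m N"
    using inv_obtain[OF assms(1,3)] by blast
  obtain B' where B': "B' \<in> carrier_mat N N" "B * B' = 1\<^sub>m N" "B' * B = 1\<^sub>m N"
    using inv_obtain[OF assms(2,4)] by blast
  have ABc: "A * B \<in> carrier_mat N N" using assms by simp
  have BAc: "B' * A' \<in> carrier_mat N N" using A' B' by simp
  have "(A * B) * (B' * A') = A * (B * (B' * A'))" using assoc3[OF assms(1,2) BAc] .
  also have "B * (B' * A') = (B * B') * A'" using assoc3[OF assms(2) B'(1) A'(1)] by simp
  also have "\<dots> = A'" using B'(2) A'(1) by simp
  finally have 1: "(A * B) * (B' * A') = 1\<^sub>m N" using A'(2) by simp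
  have "(B' * A') * (A * B) = B' * (A' * (A * B))" using assoc3[OF B'(1) A'(1) ABc] .
  also have "A' * (A * B) = (A' * A) * B" using assoc3[OF A'(1) assms(1,2)] by simp
  also have "\<dots> = B" using A'(3) assms(2) by simp
  finally have 2: "(B' * A') * (A * B) = 1\<^sub>m N" using B'(3) by simp
  show ?thesis using inv_intro[OF ABc BAc 1 2] .
qed

lemma inv_transpose:
  fixes A :: "bit mat"
  assumes "A \<in> carrier_mat N N" "invertible_mat A"
  shows "invertible_mat (transpose_mat A)"
proof -
  obtain A' where A': "A' \<in> carrier_mat N N" "A * A' = 1\<^sub>m N" "A' * A = 1\<^sub>m N"
    using inv_obtain[OF assms(1,2)] by blast
  have 1: "transpose_mat A * transpose_mat A' = 1\<^sub>m N"
    using transpose_mult[OF A'(1) assms(1)] A'(3) by simp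
  have 2: "transpose_mat A' * transpose_mat A = 1\<^sub>m N"
    using transpose_mult[OF assms(1) A'(1)] A'(2) by simp
  have c1: "transpose_mat A \<in> carrier_mat N N" "transpose_mat A' \<in> carrier_mat N N"
    using assms(1) A'(1) by simp_all
  show ?thesis using inv_intro[OF c1 1 2] .
qed

lemma parabolic_t_mem:
  "A \<in> parabolic_t N ds \<longleftrightarrow> A \<in> carrier_mat N N \<and> invertible_mat A \<and> zc (\<lambda>i j. blk ds i < blk ds j) N A"
proof
  assume "A \<in> parabolic_t N ds"
  then obtain B where B: "B \<in> parabolic N ds" "A = transpose_mat B" unfolding parabolic_t_def by auto
  then have Bc: "B \<in> carrier_mat N N" "invertible_mat B"
     "\<forall>i<N. \<forall>j<N. blk ds j < blk ds i \<longrightarrow> B $$ (i, j) = 0" unfolding parabolic_def by auto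
  show "A \<in> carrier_mat N N \<and> invertible_mat A \<and> zc (\<lambda>i j. blk ds i < blk ds j) N A"
    using Bc B(2) inv_transpose[of B N] unfolding zc_def by auto
next
  assume a: "A \<in> carrier_mat N N \<and> invertible_mat A \<and> zc (\<lambda>i j. blk ds i < blk ds j) N A"
  then have "transpose_mat A \<in> parabolic N ds"
    using inv_transpose[of A N] unfolding parabolic_def zc_def by auto
  moreover have "A = transpose_mat (transpose_mat A)" by simp
  ultimately show "A \<in> parabolic_t N ds" unfolding parabolic_t_def by blast
qed

lemma parabolic2_GS:
  "parabolic2 N lam mu = GS N (\<lambda>i j. blk lam j < blk lam i) (\<lambda>i j. blk mu i < blk mu j)"
  unfolding parabolic2_def GS_def using parabolic_t_mem[of _ N mu]
  unfolding parabolic_def zc_def by auto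

lemma bit_cases: "(x::bit) = 0 \<or> x = 1" by (cases x) auto

lemma UNIV_bit: "(UNIV :: bit set) = {0, 1}" using bit_cases by auto

lemma finite_carrier_bit: "finite (carrier_mat N N :: bit mat set)"
proof -
  let ?h = "\<lambda>A::bit mat. (\<lambda>p\<in>{..<N}\<times>{..<N}. A $$ p)"
  have inj: "inj_on ?h (carrier_mat N N)"
  proof (rule inj_onI)
    fix A B :: "bit mat" assume A: "A \<in> carrier_mat N N" and B: "B \<in> carrier_mat N N" and e: "?h A = ?h B"
    show "A = B"
    proof (rule eq_matI)
      fix i j assume "i < dim_row B" "j < dim_col B"
      then have "(i,j) \<in> {..<N}\<times>{..<N}" using B by auto
      then show "A $$ (i,j) = B $$ (i,j)" using fun_cong[OF e, of "(i,j)"] by simp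
    qed (use A B in auto)
  qed
  have "?h A \<in> PiE ({..<N}\<times>{..<N}) (\<lambda>_. UNIV)" for A
    by (rule restrict_PiE_iff[THEN iffD2]) simp
  then have "?h ` carrier_mat N N \<subseteq> PiE ({..<N}\<times>{..<N}) (\<lambda>_. UNIV)" by blast
  moreover have "finite (PiE ({..<N}\<times>{..<N}) (\<lambda>_. (UNIV :: bit set)))"
    by (intro finite_PiE) (auto simp: UNIV_bit)
  ultimately have "finite (?h ` carrier_mat N N)" using finite_subset by blast
  then show ?thesis using finite_imageD inj by blast
qed



lemma GS_carrier: "A \<in> GS N R1 R2 \<Longrightarrow> A \<in> carrier_mat N N"
  unfolding GS_def by simp

lemma GS_invertible: "A \<in> GS N R1 R2 \<Longrightarrow> invertible_mat A"
  unfolding GS_def by simp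

lemma GS_finite: "finite (GS N R1 R2)"
proof -
  have "GS N R1 R2 \<subseteq> carrier_mat N N" unfolding GS_def by blast
  then show ?thesis using finite_carrier_bit finite_subset by blast
qed

lemma GS_one:
  assumes "\<And>i. \<not> R1 i i" "\<And>i. \<not> R2 i i"
  shows "1\<^sub>m N \<in> GS N R1 R2"
proof -
  have c: "(1\<^sub>m N :: bit mat) \<in> carrier_mat N N" by simp
  have "(1\<^sub>m N :: bit mat) * 1\<^sub>m N = 1\<^sub>m N" by simp
  then have "invertible_mat (1\<^sub>m N :: bit mat)" using inv_intro[OF c c] by simp
  then show ?thesis unfolding GS_def using zc_one[of R1 N] zc_one[of R2 N] assms by simp
qed

lemma GS_mult:
  assumes "\<And>i j k. R1 i j \<Longrightarrow> R1 i k \<or> R1 k j" "\<And>i j k. R2 i j \<Longrightarrow> R2 i k \<or> R2 k j"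
    and "A \<in> GS N R1 R2" "B \<in> GS N R1 R2"
  shows "A * B \<in> GS N R1 R2"
proof -
  have A: "A \<in> carrier_mat N N" "invertible_mat A" "zc R1 N A" "zc R2 N A"
    using assms(3) unfolding GS_def by simp_all
  have B: "B \<in> carrier_mat N N" "invertible_mat B" "zc R1 N B" "zc R2 N B"
    using assms(4) unfolding GS_def by simp_all
  have "A * B \<in> carrier_mat N N" using A B by simp
  moreover have "invertible_mat (A * B)" using inv_mult[OF A(1) B(1) A(2) B(2)] .
  moreover have "zc R1 N (A * B)" using zc_mult[OF A(3) B(3) A(1) B(1)] assms(1) by blast
  moreover have "zc R2 N (A * B)" using zc_mult[OF A(4) B(4) A(1) B(1)] assms(2) by blast
  ultimately show ?thesis unfolding GS_def by simp
qed

lemma grp_inv: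
  fixes G :: "bit mat set"
  assumes fin: "finite G" and sub: "\<And>A. A \<in> G \<Longrightarrow> A \<in> carrier_mat N N"
    and one: "1\<^sub>m N \<in> G" and mult: "\<And>A B. A \<in> G \<Longrightarrow> B \<in> G \<Longrightarrow> A * B \<in> G"
    and inv: "\<And>A. A \<in> G \<Longrightarrow> invertible_mat A"
    and A: "A \<in> G"
  shows "\<exists>X\<in>G. A * X = 1\<^sub>m N \<and> X * A = 1\<^sub>m N"
proof -
  have Ac: "A \<in> carrier_mat N N" using sub A .
  obtain B where B: "B \<in> carrier_mat N N" "A * B = 1\<^sub>m N" "B * A = 1\<^sub>m N"
    using inv_obtain[OF Ac inv[OF A]] by blast
  have cancel: "X = B * (A * X)" if "X \<in> carrier_mat N N" for X
  proof -
    have "B * (A * X) = (B * A) * X" using assoc3[OF B(1) Ac that] by simp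
    also have "\<dots> = X" using B(3) that by simp
    finally show ?thesis by simp
  qed
  have injA: "inj_on (\<lambda>X. A * X) G"
  proof (rule inj_onI)
    fix X Y assume X: "X \<in> G" and Y: "Y \<in> G" and e: "A * X = A * Y"
    have "X = B * (A * X)" using cancel sub[OF X] .
    also have "\<dots> = B * (A * Y)" using e by simp
    also have "\<dots> = Y" using cancel sub[OF Y] by simp
    finally show "X = Y" .
  qed
  have "(\<lambda>X. A * X) ` G \<subseteq> G" using mult A by blast
  then have "(\<lambda>X. A * X) ` G = G" using endo_inj_surj fin injA by blast
  then have "1\<^sub>m N \<in> (\<lambda>X. A * X) ` G" using one by simp
  then obtain X where X: "X \<in> G" "1\<^sub>m N = A * X" by blast
  have "X = B * (A * X)" using cancel sub[OF X(1)] .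
  also have "\<dots> = B" using X(2)[symmetric] B(1) by simp
  finally have "X = B" .
  then show ?thesis using X B by auto
qed

lemma card_eq_kernel:
  assumes "\<And>x y. x \<in> S \<Longrightarrow> y \<in> S \<Longrightarrow> g x = g y \<longleftrightarrow> f x = f y"
  shows "card (g ` S) = card (f ` S)"
proof -
  define h where "h v = g (inv_into S f v)" for v
  have hf: "h (f x) = g x" if x: "x \<in> S" for x
  proof -
    have fx: "f x \<in> f ` S" using x by simp
    have "inv_into S f (f x) \<in> S" using inv_into_into[OF fx] .
    moreover have "f (inv_into S f (f x)) = f x" using f_inv_into_f[OF fx] .
    ultimately show ?thesis unfolding h_def using assms x by blast
  qed
  have "g ` S = h ` (f ` S)"
  proof -
    have "g ` S = (\<lambda>x. h (f x)) ` S" using hf by (auto intro: image_cong)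
    then show ?thesis by (simp add: image_image)
  qed
  moreover have "inj_on h (f ` S)"
  proof (rule inj_onI)
    fix v w assume v: "v \<in> f ` S" and w: "w \<in> f ` S" and e: "h v = h w"
    have iv: "inv_into S f v \<in> S" using inv_into_into[OF v] .
    have iw: "inv_into S f w \<in> S" using inv_into_into[OF w] .
    have "g (inv_into S f v) = g (inv_into S f w)" using e unfolding h_def .
    then have "f (inv_into S f v) = f (inv_into S f w)" using assms iv iw by blast
    then show "v = w" using f_inv_into_f[OF v] f_inv_into_f[OF w] by simp
  qed
  ultimately show ?thesis by (simp add: card_image)
qed

lemma bit_add_self[simp]: "(x::bit) + x = 0"
  using bit_cases[of x] by auto

lemma card_bit_UNIV: "card (UNIV :: bit set) = 2"
  by (simp add: UNIV_bit)

lemma count_nonzero: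
  "card (PiE {..<k} (\<lambda>_. (UNIV :: bit set)) - {restrict (\<lambda>_. 0) {..<k}}) = 2 ^ k - 1"
proof -
  have "card (PiE {..<k} (\<lambda>_. (UNIV :: bit set))) = 2 ^ k"
    by (simp add: card_PiE card_bit_UNIV)
  moreover have "restrict (\<lambda>_. 0) {..<k} \<in> PiE {..<k} (\<lambda>_. (UNIV :: bit set))"
    by (rule restrict_PiE_iff[THEN iffD2]) simp
  ultimately show ?thesis by (simp add: card_Diff_singleton)
qed


locale psetup =
  fixes N s :: nat and R1 R2 R2' :: "nat \<Rightarrow> nat \<Rightarrow> bool"
  assumes sN: "s < N"
    and irr1: "\<And>i. \<not> R1 i i" and irr2: "\<And>i. \<not> R2 i i"
    and sp1: "\<And>i j k. R1 i j \<Longrightarrow> R1 i k \<or> R1 k j"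
    and sp2: "\<And>i j k. R2 i j \<Longrightarrow> R2 i k \<or> R2 k j"
    and R2'eq: "\<And>i j. i < N \<Longrightarrow> j < N \<Longrightarrow> R2' i j \<longleftrightarrow> R2 i j \<or> (s \<le> i \<and> i < N - 1 \<and> j = N - 1)"
    and top: "\<And>i. i < s \<Longrightarrow> R2 i (N - 1)"
    and blk1: "\<And>i j. s \<le> i \<Longrightarrow> s \<le> j \<Longrightarrow> i < N \<Longrightarrow> j < N \<Longrightarrow> \<not> R1 i j"
    and blk2: "\<And>i j. s \<le> i \<Longrightarrow> s \<le> j \<Longrightarrow> i < N \<Longrightarrow> j < N \<Longrightarrow> \<not> R2 i j"
begin

abbreviation "G \<equiv> GS N R1 R2"
abbreviation "H \<equiv> GS N R1 R2'"
definition e :: "nat \<Rightarrow> bit" where "e i = (if i = N - 1 then 1 else 0)"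
abbreviation "lastcol A \<equiv> (\<lambda>i. A $$ (i, N - 1))"

lemma G_one: "1\<^sub>m N \<in> G" using GS_one irr1 irr2 by blast
lemma G_mult: "A \<in> G \<Longrightarrow> B \<in> G \<Longrightarrow> A * B \<in> G" using GS_mult sp1 sp2 by blast
lemma G_inv: "A \<in> G \<Longrightarrow> \<exists>X\<in>G. A * X = 1\<^sub>m N \<and> X * A = 1\<^sub>m N"
  by (rule grp_inv[OF GS_finite GS_carrier G_one G_mult GS_invertible])

lemma col_nonzero:
  assumes "A \<in> G" "j < N"
  shows "\<exists>i<N. A $$ (i, j) \<noteq> 0"
proof (rule ccontr)
  assume "\<not> (\<exists>i<N. A $$ (i, j) \<noteq> 0)"
  then have z: "\<And>i. i < N \<Longrightarrow> A $$ (i, j) = 0" by simp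
  obtain X where X: "X \<in> G" "X * A = 1\<^sub>m N" using G_inv[OF assms(1)] by blast
  have "(X * A) $$ (j, j) = (\<Sum>l<N. X $$ (j, l) * A $$ (l, j))"
    using mult_entry[OF GS_carrier[OF X(1)] GS_carrier[OF assms(1)] assms(2) assms(2)] .
  also have "\<dots> = (\<Sum>l<N. 0)" by (rule sum.cong) (simp_all add: z)
  finally have "(X * A) $$ (j, j) = 0" by simp
  moreover have "(X * A) $$ (j, j) = 1" using X(2) assms(2) by simp
  ultimately show False by simp
qed

lemma G_top: "A \<in> G \<Longrightarrow> i < s \<Longrightarrow> A $$ (i, N - 1) = 0"
  using top[of i] sN unfolding GS_def zc_def by auto

lemma H_char: "H = {C \<in> G. \<forall>i<N. C $$ (i, N - 1) = e i}"
proof (intro subset_antisym subsetI)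
  fix C assume C: "C \<in> H"
  have Cc: "C \<in> carrier_mat N N" "invertible_mat C" "zc R1 N C" "zc R2' N C"
    using C unfolding GS_def by simp_all
  have "zc R2 N C" unfolding zc_def
  proof (intro allI impI)
    fix i j assume "i < N" "j < N" "R2 i j"
    then have "R2' i j" using R2'eq by blast
    then show "C $$ (i, j) = 0" using Cc(4) \<open>i < N\<close> \<open>j < N\<close> unfolding zc_def by simp
  qed
  then have CG: "C \<in> G" using Cc unfolding GS_def by simp
  have off: "C $$ (i, N - 1) = 0" if "i < N" "i \<noteq> N - 1" for i
  proof (cases "i < s")
    case True then show ?thesis using G_top[OF CG] by simp
  next
    case False
    have "i < N - 1" using that by linarith
    then have "R2' i (N - 1)" using R2'eq[of i "N - 1"] that(1) sN False by simp
    then show ?thesis using Cc(4) that sN unfolding zc_def by simp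
  qed
  have "C $$ (N - 1, N - 1) = 1"
  proof (rule ccontr)
    assume "C $$ (N - 1, N - 1) \<noteq> 1"
    then have "C $$ (N - 1, N - 1) = 0" by simp
    then have "\<forall>i<N. C $$ (i, N - 1) = 0" using off by metis
    then show False using col_nonzero[OF CG, of "N - 1"] sN by auto
  qed
  then have "\<forall>i<N. C $$ (i, N - 1) = e i" using off unfolding e_def by auto
  then show "C \<in> {C \<in> G. \<forall>i<N. C $$ (i, N - 1) = e i}" using CG by simp
next
  fix C assume "C \<in> {C \<in> G. \<forall>i<N. C $$ (i, N - 1) = e i}"
  then have CG: "C \<in> G" and col: "\<And>i. i < N \<Longrightarrow> C $$ (i, N - 1) = e i" by auto
  have Cc: "C \<in> carrier_mat N N" "invertible_mat C" "zc R1 N C" "zc R2 N C"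
    using CG unfolding GS_def by simp_all
  have "zc R2' N C" unfolding zc_def
  proof (intro allI impI)
    fix i j assume ij: "i < N" "j < N" "R2' i j"
    then have "R2 i j \<or> (s \<le> i \<and> i < N - 1 \<and> j = N - 1)" using R2'eq by blast
    then show "C $$ (i, j) = 0"
    proof
      assume "R2 i j" then show ?thesis using Cc(4) ij unfolding zc_def by simp
    next
      assume "s \<le> i \<and> i < N - 1 \<and> j = N - 1"
      then show ?thesis using col[OF ij(1)] unfolding e_def by simp
    qed
  qed
  then show "C \<in> H" using Cc unfolding GS_def by simp
qed

lemma H_sub: "H \<subseteq> G" using H_char by blast

lemma mult_col_e:
  assumes "A \<in> carrier_mat N N" "C \<in> carrier_mat N N" "\<And>l. l < N \<Longrightarrow> C $$ (l, N - 1) = e l" "i < N"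
  shows "(A * C) $$ (i, N - 1) = A $$ (i, N - 1)"
proof -
  have "(A * C) $$ (i, N - 1) = (\<Sum>l<N. A $$ (i, l) * C $$ (l, N - 1))"
    using mult_entry[OF assms(1,2) assms(4)] sN by simp
  also have "\<dots> = (\<Sum>l<N. if l = N - 1 then A $$ (i, l) else 0)"
  proof (rule sum.cong)
    fix l assume "l \<in> {..<N}"
    then have l: "l < N" by simp
    show "A $$ (i, l) * C $$ (l, N - 1) = (if l = N - 1 then A $$ (i, l) else 0)"
      by (subst assms(3)[OF l]) (simp add: e_def)
  qed simp
  also have "\<dots> = A $$ (i, N - 1)" using sN by (simp add: sum.delta)
  finally show ?thesis .
qed

lemma mult_col_eq:
  assumes "X \<in> carrier_mat N N" "A \<in> carrier_mat N N" "A' \<in> carrier_mat N N"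
    "\<And>l. l < N \<Longrightarrow> A $$ (l, N - 1) = A' $$ (l, N - 1)" "i < N"
  shows "(X * A) $$ (i, N - 1) = (X * A') $$ (i, N - 1)"
proof -
  have "(X * A) $$ (i, N - 1) = (\<Sum>l<N. X $$ (i, l) * A $$ (l, N - 1))"
    using mult_entry[OF assms(1,2) assms(5)] sN by simp
  also have "\<dots> = (\<Sum>l<N. X $$ (i, l) * A' $$ (l, N - 1))"
  proof (rule sum.cong)
    fix l assume "l \<in> {..<N}"
    then have l: "l < N" by simp
    show "X $$ (i, l) * A $$ (l, N - 1) = X $$ (i, l) * A' $$ (l, N - 1)"
      by (subst assms(4)[OF l]) (rule refl)
  qed simp
  also have "\<dots> = (X * A') $$ (i, N - 1)"
    using mult_entry[OF assms(1,3) assms(5)] sN by simp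
  finally show ?thesis .
qed

lemma H_mult: "C \<in> H \<Longrightarrow> B \<in> H \<Longrightarrow> C * B \<in> H"
proof -
  assume C: "C \<in> H" and B: "B \<in> H"
  have CG: "C \<in> G" and Ccol: "\<And>i. i < N \<Longrightarrow> C $$ (i, N - 1) = e i" using C H_char by auto
  have BG: "B \<in> G" and Bcol: "\<And>i. i < N \<Longrightarrow> B $$ (i, N - 1) = e i" using B H_char by auto
  have "C * B \<in> G" using G_mult CG BG by blast
  moreover have "\<forall>i<N. (C * B) $$ (i, N - 1) = e i"
    using mult_col_e[OF GS_carrier[OF CG] GS_carrier[OF BG] Bcol] Ccol by simp
  ultimately show "C * B \<in> H" using H_char by blast
qed

lemma coset_sub:
  assumes A: "A \<in> G" and A': "A' \<in> G" and eq: "\<And>l. l < N \<Longrightarrow> A $$ (l, N - 1) = A' $$ (l, N - 1)"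
  shows "(\<lambda>B. A' * B) ` H \<subseteq> (\<lambda>B. A * B) ` H"
proof
  fix Y assume "Y \<in> (\<lambda>B. A' * B) ` H"
  then obtain B where B: "B \<in> H" "Y = A' * B" by blast
  obtain X where X: "X \<in> G" "A * X = 1\<^sub>m N" "X * A = 1\<^sub>m N" using G_inv[OF A] by blast
  have Ac: "A \<in> carrier_mat N N" and A'c: "A' \<in> carrier_mat N N" and Xc: "X \<in> carrier_mat N N"
    using A A' X(1) GS_carrier by blast+
  define C where "C = X * A'"
  have CG: "C \<in> G" unfolding C_def using G_mult X(1) A' by blast
  have "\<forall>i<N. C $$ (i, N - 1) = e i"
  proof (intro allI impI)
    fix i assume i: "i < N"
    have "C $$ (i, N - 1) = (X * A) $$ (i, N - 1)"
      unfolding C_def using mult_col_eq[OF Xc A'c Ac _ i] eq by metis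
    also have "\<dots> = e i" using X(3) i sN unfolding e_def by simp
    finally show "C $$ (i, N - 1) = e i" .
  qed
  then have CH: "C \<in> H" using H_char CG by blast
  have Bc: "B \<in> carrier_mat N N" using B(1) GS_carrier by blast
  have Cc: "C \<in> carrier_mat N N" using CG GS_carrier by blast
  have "A * (C * B) = (A * C) * B" using assoc3[OF Ac Cc Bc] by simp
  also have "A * C = (A * X) * A'" unfolding C_def using assoc3[OF Ac Xc A'c] by simp
  also have "\<dots> = A'" using X(2) A'c by simp
  finally have "Y = A * (C * B)" using B(2) by simp
  moreover have "C * B \<in> H" using H_mult CH B(1) by blast
  ultimately show "Y \<in> (\<lambda>B. A * B) ` H" by blast
qed

lemma coset_eq:
  assumes A: "A \<in> G" and A': "A' \<in> G"
  shows "(\<lambda>B. A * B) ` H = (\<lambda>B. A' * B) ` H \<longleftrightarrow> (\<forall>l<N. A $$ (l, N - 1) = A' $$ (l, N - 1))"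
proof
  assume e1: "(\<lambda>B. A * B) ` H = (\<lambda>B. A' * B) ` H"
  have oneH: "1\<^sub>m N \<in> H"
  proof -
    have "\<forall>i<N. (1\<^sub>m N :: bit mat) $$ (i, N - 1) = e i" unfolding e_def by auto
    then show ?thesis using H_char G_one by blast
  qed
  have A'c: "A' \<in> carrier_mat N N" using A' GS_carrier by blast
  have "A' = A' * 1\<^sub>m N" using A'c by simp
  then have "A' \<in> (\<lambda>B. A' * B) ` H" using oneH by blast
  then have "A' \<in> (\<lambda>B. A * B) ` H" using e1 by simp
  then obtain B where B: "B \<in> H" "A' = A * B" by blast
  have BG: "B \<in> G" and Bcol: "\<And>i. i < N \<Longrightarrow> B $$ (i, N - 1) = e i" using B(1) H_char by auto
  show "\<forall>l<N. A $$ (l, N - 1) = A' $$ (l, N - 1)"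
    using mult_col_e[OF GS_carrier[OF A] GS_carrier[OF BG] Bcol] B(2) by simp
next
  assume "\<forall>l<N. A $$ (l, N - 1) = A' $$ (l, N - 1)"
  then show "(\<lambda>B. A * B) ` H = (\<lambda>B. A' * B) ` H"
    using coset_sub[OF A A'] coset_sub[OF A' A] by (metis subset_antisym)
qed

end


context psetup begin

lemma construct:
  assumes v: "v \<in> PiE {..<N - s} (\<lambda>_. UNIV)" and p: "p < N - s" "v p = 1"
  shows "\<exists>A\<in>G. \<forall>i<N - s. A $$ (s + i, N - 1) = v i"
proof -
  define d where "d i = (if s \<le> i \<and> i < N then v (i - s) else 0) + (if i = N - 1 then 1 else (0::bit))" for i
  define c0 where "c0 = 1 + v (N - s - 1)"
  define r where "r j = (if j = N - 1 then 1 else 0) + c0 * (if j = s + p then 1 else (0::bit))" for j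
  define A where "A = mat N N (\<lambda>(i,j). (if i = j then 1 else 0) + d i * r j)"
  have Ac: "A \<in> carrier_mat N N" unfolding A_def by simp
  have Aij: "A $$ (i, j) = (if i = j then 1 else 0) + d i * r j" if "i < N" "j < N" for i j
    unfolding A_def using that by simp
  have dz: "d i = 0" if "i < s" for i
  proof -
    have "i \<noteq> N - 1" using that sN by linarith
    then show ?thesis unfolding d_def using that by simp
  qed
  have rz: "r j = 0" if "j < s" for j
  proof -
    have "j \<noteq> N - 1" "j \<noteq> s + p" using that sN by linarith+
    then show ?thesis unfolding r_def by simp
  qed
  have off: "A $$ (i, j) = 0" if "i < N" "j < N" "i \<noteq> j" "\<not> (s \<le> i \<and> s \<le> j)" for i j
  proof -
    have "d i * r j = 0" using that dz rz by (cases "i < s") auto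
    then show ?thesis using Aij[OF that(1,2)] that(3) by simp
  qed
  have z1: "zc R1 N A" unfolding zc_def
  proof (intro allI impI)
    fix i j assume ij: "i < N" "j < N" "R1 i j"
    have "i \<noteq> j" using ij(3) irr1 by blast
    moreover have "\<not> (s \<le> i \<and> s \<le> j)" using blk1 ij by blast
    ultimately show "A $$ (i, j) = 0" using off ij by blast
  qed
  have z2: "zc R2 N A" unfolding zc_def
  proof (intro allI impI)
    fix i j assume ij: "i < N" "j < N" "R2 i j"
    have "i \<noteq> j" using ij(3) irr2 by blast
    moreover have "\<not> (s \<le> i \<and> s \<le> j)" using blk2 ij by blast
    ultimately show "A $$ (i, j) = 0" using off ij by blast
  qed
  have N1: "N - 1 < N" "s \<le> N - 1" using sN by linarith+
  have sp: "s + p < N" using p by linarith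
  have dN: "d (N - 1) = v (N - s - 1) + 1"
  proof -
    have "N - 1 - s = N - s - 1" by simp
    then show ?thesis unfolding d_def using N1 by simp
  qed
  have dsp: "d (s + p) = v p + (if s + p = N - 1 then 1 else 0)"
    unfolding d_def using sp by simp
  have rd: "(\<Sum>l<N. r l * d l) = 0"
  proof -
    have "(\<Sum>l<N. r l * d l) = (\<Sum>l<N. (if l = N - 1 then d l else 0) + (if l = s + p then c0 * d l else 0))"
      by (rule sum.cong) (simp_all add: r_def distrib_right)
    also have "\<dots> = d (N - 1) + c0 * d (s + p)"
      using N1 sp by (simp add: sum.distrib sum.delta)
    also have "\<dots> = 0"
    proof (cases "p = N - s - 1")
      case True
      then have "s + p = N - 1" using sN by linarith
      moreover have "v (N - s - 1) = 1" using True p(2) by simp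
      ultimately show ?thesis using dN unfolding c0_def by simp
    next
      case False
      then have "s + p \<noteq> N - 1" using sN p by linarith
      then have "d (s + p) = 1" using dsp p(2) by simp
      then show ?thesis using dN bit_cases[of "v (N - s - 1)"] unfolding c0_def by auto
    qed
    finally show ?thesis .
  qed
  have AA: "A * A = 1\<^sub>m N"
  proof (rule eq_matI)
    fix i j assume "i < dim_row (1\<^sub>m N :: bit mat)" "j < dim_col (1\<^sub>m N :: bit mat)"
    then have ij: "i < N" "j < N" by simp_all
    have tm: "A $$ (i, l) * A $$ (l, j) = (if l = i then (if i = j then 1 else 0) + d i * r j else 0)
        + (if l = j then d i * r j else 0) + d i * r j * (r l * d l)" if l: "l < N" for l
      using Aij[OF ij(1) l] Aij[OF l ij(2)]
      by (cases "l = i"; cases "l = j") (simp_all add: algebra_simps)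
    have "(A * A) $$ (i, j) = (\<Sum>l<N. A $$ (i, l) * A $$ (l, j))"
      using mult_entry[OF Ac Ac ij] .
    also have "\<dots> = (\<Sum>l<N. (if l = i then (if i = j then 1 else 0) + d i * r j else 0)
        + (if l = j then d i * r j else 0) + d i * r j * (r l * d l))"
      by (rule sum.cong) (simp_all add: tm)
    also have "\<dots> = ((if i = j then 1 else 0) + d i * r j) + d i * r j + d i * r j * (\<Sum>l<N. r l * d l)"
      using ij by (simp add: sum.distrib sum.delta sum_distrib_left)
    also have "\<dots> = (if i = j then 1 else 0)" using rd by (simp add: add.assoc)
    also have "\<dots> = 1\<^sub>m N $$ (i, j)" using ij by simp
    finally show "(A * A) $$ (i, j) = 1\<^sub>m N $$ (i, j)" .
  qed (use Ac in auto)
  have "invertible_mat A" using inv_intro[OF Ac Ac AA AA] .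
  then have AG: "A \<in> G" using Ac z1 z2 unfolding GS_def by simp
  have rN: "r (N - 1) = 1"
  proof (cases "N - 1 = s + p")
    case True
    then have "p = N - s - 1" by linarith
    then have "c0 = 0" unfolding c0_def using p(2) by simp
    then show ?thesis unfolding r_def by simp
  next
    case False then show ?thesis unfolding r_def by simp
  qed
  have "\<forall>i<N - s. A $$ (s + i, N - 1) = v i"
  proof (intro allI impI)
    fix i assume i: "i < N - s"
    have si: "s + i < N" using i by linarith
    have "A $$ (s + i, N - 1) = (if s + i = N - 1 then 1 else 0) + d (s + i) * r (N - 1)"
      using Aij[OF si N1(1)] .
    also have "\<dots> = (if s + i = N - 1 then 1 else 0) + (v i + (if s + i = N - 1 then 1 else 0))"
      using rN si unfolding d_def by simp
    also have "\<dots> = v i" by (cases "s + i = N - 1") (simp_all add: add.assoc[symmetric])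
    finally show "A $$ (s + i, N - 1) = v i" .
  qed
  then show ?thesis using AG by blast
qed

definition cf :: "bit mat \<Rightarrow> nat \<Rightarrow> bit" where
  "cf A = restrict (\<lambda>i. A $$ (s + i, N - 1)) {..<N - s}"

lemma cf_eq:
  assumes A: "A \<in> G" and A': "A' \<in> G"
  shows "cf A = cf A' \<longleftrightarrow> (\<forall>l<N. A $$ (l, N - 1) = A' $$ (l, N - 1))"
proof
  assume e: "cf A = cf A'"
  show "\<forall>l<N. A $$ (l, N - 1) = A' $$ (l, N - 1)"
  proof (intro allI impI)
    fix l assume l: "l < N"
    show "A $$ (l, N - 1) = A' $$ (l, N - 1)"
    proof (cases "l < s")
      case True then show ?thesis using G_top[OF A] G_top[OF A'] by simp
    next
      case False
      then have l': "l - s < N - s" "s + (l - s) = l" using l by linarith+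
      have "cf A (l - s) = cf A' (l - s)" using e by simp
      then show ?thesis unfolding cf_def using l' by simp
    qed
  qed
next
  assume "\<forall>l<N. A $$ (l, N - 1) = A' $$ (l, N - 1)"
  then show "cf A = cf A'" unfolding cf_def
    by (intro restrict_ext) simp
qed

lemma cf_image: "cf ` G = PiE {..<N - s} (\<lambda>_. UNIV) - {restrict (\<lambda>_. 0) {..<N - s}}"
proof (intro subset_antisym subsetI)
  fix x assume "x \<in> cf ` G"
  then obtain A where A: "A \<in> G" "x = cf A" by blast
  have "cf A \<in> PiE {..<N - s} (\<lambda>_. UNIV)" unfolding cf_def
    by (rule restrict_PiE_iff[THEN iffD2]) simp
  moreover have "cf A \<noteq> restrict (\<lambda>_. 0) {..<N - s}"
  proof
    assume e: "cf A = restrict (\<lambda>_. 0) {..<N - s}"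
    have "\<forall>l<N. A $$ (l, N - 1) = 0"
    proof (intro allI impI)
      fix l assume l: "l < N"
      show "A $$ (l, N - 1) = 0"
      proof (cases "l < s")
        case True then show ?thesis using G_top[OF A(1)] by simp
      next
        case False
        then have l': "l - s < N - s" "s + (l - s) = l" using l by linarith+
        have "cf A (l - s) = restrict (\<lambda>_. (0::bit)) {..<N - s} (l - s)" using e by simp
        then show ?thesis unfolding cf_def using l' by simp
      qed
    qed
    then show False using col_nonzero[OF A(1), of "N - 1"] sN by auto
  qed
  ultimately show "x \<in> PiE {..<N - s} (\<lambda>_. UNIV) - {restrict (\<lambda>_. 0) {..<N - s}}" using A by simp
next
  fix v :: "nat \<Rightarrow> bit" assume "v \<in> PiE {..<N - s} (\<lambda>_. UNIV) - {restrict (\<lambda>_. 0) {..<N - s}}"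
  then have v: "v \<in> PiE {..<N - s} (\<lambda>_. UNIV)" and nz: "v \<noteq> restrict (\<lambda>_. 0) {..<N - s}" by auto
  have "\<exists>p<N - s. v p = 1"
  proof (rule ccontr)
    assume "\<not> (\<exists>p<N - s. v p = 1)"
    then have z: "\<And>p. p < N - s \<Longrightarrow> v p = 0" by simp
    have "v = restrict (\<lambda>_. 0) {..<N - s}"
    proof
      fix x show "v x = restrict (\<lambda>_. 0) {..<N - s} x"
      proof (cases "x < N - s")
        case True then show ?thesis using z by simp
      next
        case False then show ?thesis using PiE_arb[OF v, of x] by simp
      qed
    qed
    then show False using nz by simp
  qed
  then obtain p where p: "p < N - s" "v p = 1" by blast
  obtain A where A: "A \<in> G" "\<forall>i<N - s. A $$ (s + i, N - 1) = v i" using construct[OF v p] by blast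
  have "cf A = v"
  proof
    fix x show "cf A x = v x"
    proof (cases "x < N - s")
      case True then show ?thesis unfolding cf_def using A(2) by simp
    next
      case False then show ?thesis unfolding cf_def using PiE_arb[OF v, of x] by simp
    qed
  qed
  then show "v \<in> cf ` G" using A(1) by blast
qed

theorem index_main: "H \<subseteq> G \<and> subgroup_index G H = 2 ^ (N - s) - 1"
proof -
  have "{(\<lambda>B. A * B) ` H | A. A \<in> G} = (\<lambda>A. (\<lambda>B. A * B) ` H) ` G" by blast
  then have "subgroup_index G H = card ((\<lambda>A. (\<lambda>B. A * B) ` H) ` G)"
    unfolding subgroup_index_def by simp
  also have "\<dots> = card (cf ` G)"
  proof (rule card_eq_kernel)
    fix x y assume "x \<in> G" "y \<in> G"
    then show "((\<lambda>B. x * B) ` H = (\<lambda>B. y * B) ` H) \<longleftrightarrow> cf x = cf y"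
      using coset_eq cf_eq by simp
  qed
  also have "\<dots> = 2 ^ (N - s) - 1" using cf_image count_nonzero by simp
  finally show ?thesis using H_sub by simp
qed

end


lemma concrete_setup:
  fixes lam mu :: "nat list" and n :: nat
  assumes "decomposition n lam" and "decomposition n mu"
    and "lam \<noteq> []" and "mu \<noteq> []"
    and "1 < last mu" and "last mu < last lam"
  defines "s \<equiv> sum_list (butlast mu)"
  shows "psetup n s (\<lambda>i j. blk lam j < blk lam i) (\<lambda>i j. blk mu i < blk mu j)
           (\<lambda>i j. blk (butlast mu @ [last mu - 1, 1]) i < blk (butlast mu @ [last mu - 1, 1]) j)
         \<and> n - s = last mu"
proof -
  define xs where "xs = butlast mu"
  define k where "k = last mu"
  define ys where "ys = butlast lam"
  define c where "c = last lam"
  define mu' where "mu' = butlast mu @ [last mu - 1, 1]"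
  have mu_eq: "mu = xs @ [k]" unfolding xs_def k_def using assms(4) by simp
  have lam_eq: "lam = ys @ [c]" unfolding ys_def c_def using assms(3) by simp
  have smu: "sum_list mu = n" using assms(2) unfolding decomposition_def by simp
  have slam: "sum_list lam = n" using assms(1) unfolding decomposition_def by simp
  have s_def': "s = sum_list xs" unfolding s_def xs_def by simp
  have n_mu: "n = s + k" using smu mu_eq s_def' by simp
  have n_lam: "n = sum_list ys + c" using slam lam_eq by simp
  have k1: "1 < k" using assms(5) k_def by simp
  have kc: "k < c" using assms(6) k_def c_def by simp
  have sys: "sum_list ys \<le> s" using n_mu n_lam kc by linarith
  have mu'_eq: "mu' = (xs @ [k - 1]) @ [1]" unfolding mu'_def xs_def k_def by simp
  have sxs': "sum_list (xs @ [k - 1]) = n - 1" using n_mu k1 s_def' by simp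
  have bxs: "blk xs i < length xs" if "i < s" for i
    using blk_lt[of i xs] that s_def' by simp
  have bmu: "blk mu i = (if i < s then blk xs i else length xs)" if "i < n" for i
  proof (cases "i < s")
    case True then show ?thesis using blk_snoc_lo[of i xs k] mu_eq s_def' by simp
  next
    case False then show ?thesis using blk_snoc_hi[of xs i k] mu_eq s_def' that n_mu by simp
  qed
  have bmu': "blk mu' i = (if i < s then blk xs i else if i < n - 1 then length xs else length xs + 1)"
    if "i < n" for i
  proof (cases "i < n - 1")
    case True
    then have "blk mu' i = blk (xs @ [k - 1]) i" using blk_snoc_lo[of i "xs @ [k - 1]" 1] mu'_eq sxs' by simp
    also have "\<dots> = (if i < s then blk xs i else length xs)"
    proof (cases "i < s")
      case True then show ?thesis using blk_snoc_lo[of i xs "k - 1"] s_def' by simp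
    next
      case False then show ?thesis using blk_snoc_hi[of xs i "k - 1"] s_def' \<open>i < n - 1\<close> n_mu k1 by simp
    qed
    finally show ?thesis using True by simp
  next
    case False
    then have "blk mu' i = length (xs @ [k - 1])"
      using blk_snoc_hi[of "xs @ [k - 1]" i 1] mu'_eq sxs' that by simp
    moreover have "\<not> i < s" using False n_mu k1 by linarith
    ultimately show ?thesis using False by simp
  qed
  have blam: "blk lam i = length ys" if "s \<le> i" "i < n" for i
    using blk_snoc_hi[of ys i c] lam_eq sys that n_lam by simp
  have "psetup n s (\<lambda>i j. blk lam j < blk lam i) (\<lambda>i j. blk mu i < blk mu j)
           (\<lambda>i j. blk mu' i < blk mu' j)"
  proof
    show "s < n" using n_mu k1 by simp
  next
    fix i show "\<not> blk lam i < blk lam i" by simp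
  next
    fix i show "\<not> blk mu i < blk mu i" by simp
  next
    fix i j l assume "blk lam j < blk lam i"
    then show "blk lam l < blk lam i \<or> blk lam j < blk lam l" by linarith
  next
    fix i j l assume "blk mu i < blk mu j"
    then show "blk mu i < blk mu l \<or> blk mu l < blk mu j" by linarith
  next
    fix i j assume ij: "i < n" "j < n"
    show "blk mu' i < blk mu' j \<longleftrightarrow> blk mu i < blk mu j \<or> (s \<le> i \<and> i < n - 1 \<and> j = n - 1)"
      unfolding bmu[OF ij(1)] bmu[OF ij(2)] bmu'[OF ij(1)] bmu'[OF ij(2)]
      using bxs[of i] bxs[of j] ij n_mu k1 by (auto split: if_splits)
  next
    fix i assume i: "i < s"
    have "n - 1 < n" "\<not> n - 1 < s" using n_mu k1 by linarith+
    then show "blk mu i < blk mu (n - 1)" using bmu[of i] bmu[of "n - 1"] bxs[OF i] i n_mu by simp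
  next
    fix i j assume "s \<le> i" "s \<le> j" "i < n" "j < n"
    then show "\<not> blk lam j < blk lam i" using blam by simp
  next
    fix i j assume "s \<le> i" "s \<le> j" "i < n" "j < n"
    then show "\<not> blk mu i < blk mu j" using bmu by simp
  qed
  moreover have "n - s = last mu" using n_mu k_def by simp
  ultimately show ?thesis unfolding mu'_def by simp
qed

theorem corollary1:
  fixes lam mu :: "nat list" and n :: nat
  assumes "decomposition n lam" and "decomposition n mu"
    and "lam \<noteq> []" and "mu \<noteq> []"
    and "1 < last mu" and "last mu < last lam"
  shows "parabolic2 n lam (butlast mu @ [last mu - 1, 1]) \<subseteq> parabolic2 n lam mu
       \<and> subgroup_index (parabolic2 n lam mu) (parabolic2 n lam (butlast mu @ [last mu - 1, 1]))
           = 2 ^ last mu - 1"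
proof -
  have cs: "psetup n (sum_list (butlast mu)) (\<lambda>i j. blk lam j < blk lam i) (\<lambda>i j. blk mu i < blk mu j)
           (\<lambda>i j. blk (butlast mu @ [last mu - 1, 1]) i < blk (butlast mu @ [last mu - 1, 1]) j)"
    and ns: "n - sum_list (butlast mu) = last mu"
    using concrete_setup[OF assms] by simp_all
  show ?thesis using psetup.index_main[OF cs] ns unfolding parabolic2_GS by simp
qed

end
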